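(* Let $P$ be an online abstract network design problem and $\mathcal M$ a family of metrics. Suppose that there exists an online algorithm $\mathsf{Alg}^{\mathcal M}$ for $P$ over metrics belonging to $\mathcal M$ with competitive ratio $\beta$, and that there exists an online embedding algorithm $\mathsf{Embed}^{\mathcal M}$ that embeds into $\mathcal M$ with distortion $\alpha$, where the embeddings produced are fully extendable and $\mathsf{Embed}^{\mathcal M}$ and $\mathsf{Alg}^{\mathcal M}$ are compatible. Then there exists an online algorithm for $P$ over arbitrary metrics with competitive ratio $\alpha\beta$. Moreover, when either $\mathsf{Embed}^{\mathcal M}$ or $\mathsf{Alg}^{\mathcal M}$ is randomized, the resulting algorithm is randomized with expected competitive ratio $\alpha\beta$.
   Context: Abstract network design: instance = metric (complete graph with edge lengths) $(V,d_V)$ and online requests $Z_i\subseteq V$; with $\mathcal Z_i=\bigcup_{j\le i}Z_j$, the algorithm irrevocably outputs at step $i$ a response $(R_i,C_i)$, $R_i$ a set of edges, $C_i$ an ordered list of pairs from $\binom{\mathcal Z_i}{2}$; given feasibility functions $\mathcal F_i$, the solution is feasible iff $\mathcal F_i(C_1,\ldots,C_i)=1$ and each pair of $C_j$ is connected in $R_j$ for $j\le i$; feasibility must hold at every step. Load functions $\rho_i$ on subsets of $\{1,\ldots,i\}$ are subadditive, monotone, zero exactly on $\emptyset$, consistent; $\rho(I)=\rho_{\max I}(I)$; cost $=\sum_e d(e)\rho(\{j:e\in R_j\})$. $c$-competitive: (expected) cost $\le c\cdot\mathrm{OPT}$ on every instance. Online embedding $f=(f_1,\ldots,f_r)$ of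 the request sequence (terminals) into $(M,d_M)$: each $f_i$ non-contractive on the terminals so far and extending $f_{i-1}$, distortion bound $\alpha_i$. It is fully extendable with respect to $M_1\subseteq\cdots\subseteq M_r\subseteq M$ if for all $i$ there are $F_i:V\to M$, $H_i:M_i\to V$ with: (i) depending only on terminals so far; (ii) $F_i$ extends $f_i$, $d_M(F_i(u),F_i(v))\le\alpha_i d_V(u,v)$; (iii) $H_i$ extends $f_i^{-1}$ and is non-expansive on $M_i$; (iv) $H_{i+1}$ extends $H_i$ (for probabilistic embeddings, per embedding in the support, with (ii) in expectation). The instance induced by $f$ on $(M,d_M)$ has requests $f(Z_i)$, feasibility functions $\mathcal F'_i(C'_1,\ldots,C'_i)=\mathcal F_i(f^{-1}(C'_1),\ldots,f^{-1}(C'_i))$ and the same load function. $f$ and a solution $((R^M_1,C^M_1),\ldots)$ of the induced instance are compatible if $M_i$ contains the vertex set of $R^M_i$ for each $i$ (for every embedding/solution in the supports if randomized). $\mathsf{Embed}^{\mathcal M}$ and $\mathsf{Alg}^{\mathcal M}$ are compatible if for every instance, the embedding $f$ produced by $\mathsf{Embed}^{\mathcal M}$ into some $(M,d_M)\in\mathcal M$ and the solution of $\mathsf{Alg}^{\mathcal M}$ on the instance induced by $f$ are compatible. *)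

theory Defs
  imports "HOL-Probability.Probability"
begin

text \<open>A (finite) metric given as a vertex set with a distance function (complete graph
  with edge lengths).\<close>
definition fin_metric :: "'a set \<Rightarrow> ('a \<Rightarrow> 'a \<Rightarrow> real) \<Rightarrow> bool" where
  "fin_metric V d \<longleftrightarrow> finite V \<and>
     (\<forall>u\<in>V. \<forall>v\<in>V. 0 \<le> d u v \<and> (d u v = 0 \<longleftrightarrow> u = v) \<and> d u v = d v u) \<and>
     (\<forall>u\<in>V. \<forall>v\<in>V. \<forall>w\<in>V. d u w \<le> d u v + d v w)"

definition edges :: "'a set \<Rightarrow> 'a set set" where
  "edges S = {{u, v} | u v. u \<in> S \<and> v \<in> S \<and> u \<noteq> v}"

definition edge_len :: "('a \<Rightarrow> 'a \<Rightarrow> real) \<Rightarrow> 'a set \<Rightarrow> real" where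
  "edge_len d e = (THE l. \<exists>u v. e = {u, v} \<and> u \<noteq> v \<and> l = d u v)"

definition edge_rel :: "'a set set \<Rightarrow> ('a \<times> 'a) set" where
  "edge_rel R = {(u, v). {u, v} \<in> R}"

definition connected_in :: "'a set set \<Rightarrow> 'a set \<Rightarrow> bool" where
  "connected_in R p \<longleftrightarrow> (\<exists>u v. p = {u, v} \<and> (u, v) \<in> (edge_rel R)\<^sup>*)"

text \<open>Cumulative terminal set after step i (steps are 0-based): union of Z_0..Z_i.\<close>
definition cum :: "'a set list \<Rightarrow> nat \<Rightarrow> 'a set" where
  "cum Z i = (\<Union>j\<in>{j. j \<le> i \<and> j < length Z}. Z ! j)"

text \<open>feas i is the feasibility function F_i, applied to the list [C_0,...,C_i];
  load i is the load function rho_i on subsets of {0..i}.\<close>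
record 'a nd_inst =
  verts :: "'a set"
  dist :: "'a \<Rightarrow> 'a \<Rightarrow> real"
  reqs :: "'a set list"
  feas :: "nat \<Rightarrow> 'a set list list \<Rightarrow> bool"
  load :: "nat \<Rightarrow> nat set \<Rightarrow> real"

text \<open>A response (R_i, C_i): a set of edges and an ordered list of pairs.\<close>
type_synonym 'a resp = "'a set set \<times> 'a set list"

definition load_fn :: "nat \<Rightarrow> (nat \<Rightarrow> nat set \<Rightarrow> real) \<Rightarrow> bool" where
  "load_fn r \<rho> \<longleftrightarrow> (\<forall>i<r.
     (\<forall>A B. A \<subseteq> {0..i} \<longrightarrow> B \<subseteq> {0..i} \<longrightarrow> \<rho> i (A \<union> B) \<le> \<rho> i A + \<rho> i B) \<and>
     (\<forall>A B. A \<subseteq> B \<longrightarrow> B \<subseteq> {0..i} \<longrightarrow> \<rho> i A \<le> \<rho> i B) \<and>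
     (\<forall>A. A \<subseteq> {0..i} \<longrightarrow> (\<rho> i A = 0 \<longleftrightarrow> A = {})) \<and>
     (\<forall>k A. i \<le> k \<longrightarrow> k < r \<longrightarrow> A \<subseteq> {0..i} \<longrightarrow> \<rho> k A = \<rho> i A))"

definition wf_inst :: "'a nd_inst \<Rightarrow> bool" where
  "wf_inst I \<longleftrightarrow> fin_metric (verts I) (dist I) \<and> (\<forall>Z\<in>set (reqs I). Z \<subseteq> verts I)
     \<and> load_fn (length (reqs I)) (load I)"

definition rho :: "'a nd_inst \<Rightarrow> nat set \<Rightarrow> real" where
  "rho I A = load I (Max A) A"

definition feasible :: "'a nd_inst \<Rightarrow> 'a resp list \<Rightarrow> bool" where
  "feasible I sol \<longleftrightarrow> length sol = length (reqs I) \<and>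
     (\<forall>i<length sol.
        fst (sol ! i) \<subseteq> edges (verts I) \<and>
        set (snd (sol ! i)) \<subseteq> edges (cum (reqs I) i) \<and>
        feas I i (map snd (take (Suc i) sol)) \<and>
        (\<forall>p\<in>set (snd (sol ! i)). connected_in (fst (sol ! i)) p))"

definition cost :: "'a nd_inst \<Rightarrow> 'a resp list \<Rightarrow> real" where
  "cost I sol = (\<Sum>e\<in>(\<Union>i<length sol. fst (sol ! i)).
      edge_len (dist I) e * rho I {i. i < length sol \<and> e \<in> fst (sol ! i)})"

definition OPT :: "'a nd_inst \<Rightarrow> real" where
  "OPT I = Inf (cost I ` {sol. feasible I sol})"

type_synonym 'a nd_alg = "'a nd_inst \<Rightarrow> nat \<Rightarrow> 'a resp"

definition prefix_eq :: "'a nd_inst \<Rightarrow> 'a nd_inst \<Rightarrow> nat \<Rightarrow> bool" where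
  "prefix_eq I J i \<longleftrightarrow> verts I = verts J \<and> dist I = dist J \<and>
     i < length (reqs I) \<and> i < length (reqs J) \<and>
     take (Suc i) (reqs I) = take (Suc i) (reqs J) \<and>
     (\<forall>j\<le>i. feas I j = feas J j \<and> load I j = load J j)"

definition online_alg :: "'a nd_alg \<Rightarrow> bool" where
  "online_alg A \<longleftrightarrow> (\<forall>I J i. prefix_eq I J i \<longrightarrow> A I i = A J i)"

definition run :: "'a nd_alg \<Rightarrow> 'a nd_inst \<Rightarrow> 'a resp list" where
  "run A I = map (A I) [0..<length (reqs I)]"

text \<open>A (possibly randomized) online algorithm is a distribution over deterministic online
  algorithms; c-competitive on the instance class Q.\<close>
definition competitive :: "'a nd_inst set \<Rightarrow> 'a nd_alg pmf \<Rightarrow> real \<Rightarrow> bool" where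
  "competitive Q Alg c \<longleftrightarrow> (\<forall>A\<in>set_pmf Alg. online_alg A) \<and>
     (\<forall>I\<in>Q. (\<exists>sol. feasible I sol) \<longrightarrow>
        (\<forall>A\<in>set_pmf Alg. feasible I (run A I)) \<and>
        (\<integral>\<^sup>+ A. ennreal (cost I (run A I)) \<partial>measure_pmf Alg) \<le> ennreal (c * OPT I))"

definition over_metrics :: "'a nd_inst set \<Rightarrow> ('a set \<times> ('a \<Rightarrow> 'a \<Rightarrow> real)) set \<Rightarrow> 'a nd_inst set" where
  "over_metrics P MM = {I\<in>P. (verts I, dist I) \<in> MM}"

definition is_online_emb :: "'a set \<Rightarrow> ('a \<Rightarrow> 'a \<Rightarrow> real) \<Rightarrow> 'a set list \<Rightarrow>
    'a set \<Rightarrow> ('a \<Rightarrow> 'a \<Rightarrow> real) \<Rightarrow> (nat \<Rightarrow> 'a \<Rightarrow> 'a) \<Rightarrow> bool" where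
  "is_online_emb V d Z M dM f \<longleftrightarrow> (\<forall>i<length Z.
     f i ` cum Z i \<subseteq> M \<and>
     (\<forall>j\<le>i. \<forall>z\<in>cum Z j. f i z = f j z) \<and>
     (\<forall>u\<in>cum Z i. \<forall>v\<in>cum Z i. d u v \<le> dM (f i u) (f i v)))"

text \<open>Output of a (deterministic) embedding algorithm: target metric (tgt, tdist), the maps
  f_i (emap), the sets M_i (esub) and the extension maps F_i (eF) and H_i (eH).\<close>
record 'a emb =
  tgt :: "'a set"
  tdist :: "'a \<Rightarrow> 'a \<Rightarrow> real"
  emap :: "nat \<Rightarrow> 'a \<Rightarrow> 'a"
  esub :: "nat \<Rightarrow> 'a set"
  eF :: "nat \<Rightarrow> 'a \<Rightarrow> 'a"
  eH :: "nat \<Rightarrow> 'a \<Rightarrow> 'a"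

type_synonym 'a emb_alg = "'a set \<times> ('a \<Rightarrow> 'a \<Rightarrow> real) \<times> 'a set list \<Rightarrow> 'a emb"

definition online_emb_alg :: "'a emb_alg \<Rightarrow> bool" where
  "online_emb_alg E \<longleftrightarrow>
     (\<forall>V d Z Z'. tgt (E (V, d, Z)) = tgt (E (V, d, Z')) \<and> tdist (E (V, d, Z)) = tdist (E (V, d, Z'))) \<and>
     (\<forall>V d Z Z' i. i < length Z \<longrightarrow> i < length Z' \<longrightarrow> take (Suc i) Z = take (Suc i) Z' \<longrightarrow>
        emap (E (V, d, Z)) i = emap (E (V, d, Z')) i \<and>
        esub (E (V, d, Z)) i = esub (E (V, d, Z')) i \<and>
        eF (E (V, d, Z)) i = eF (E (V, d, Z')) i \<and>
        eH (E (V, d, Z)) i = eH (E (V, d, Z')) i)"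

text \<open>Conditions of full extendability w.r.t. M_0 \<subseteq> ... \<subseteq> M_{r-1} \<subseteq> M that hold per
  embedding: (ii) without the stretch bound (which is imposed in expectation separately),
  (iii) and (iv).\<close>
definition fully_ext :: "'a set \<Rightarrow> ('a \<Rightarrow> 'a \<Rightarrow> real) \<Rightarrow> 'a set list \<Rightarrow> 'a emb \<Rightarrow> bool" where
  "fully_ext V d Z e \<longleftrightarrow>
     (\<forall>i<length Z. esub e i \<subseteq> tgt e) \<and>
     (\<forall>i. Suc i < length Z \<longrightarrow> esub e i \<subseteq> esub e (Suc i)) \<and>
     (\<forall>i<length Z. (\<forall>u\<in>V. eF e i u \<in> tgt e) \<and> (\<forall>z\<in>cum Z i. eF e i z = emap e i z)) \<and>
     (\<forall>i<length Z. (\<forall>x\<in>esub e i. eH e i x \<in> V) \<and>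
        (\<forall>z\<in>cum Z i. emap e i z \<in> esub e i \<and> eH e i (emap e i z) = z) \<and>
        (\<forall>x\<in>esub e i. \<forall>y\<in>esub e i. d (eH e i x) (eH e i y) \<le> tdist e x y)) \<and>
     (\<forall>i. Suc i < length Z \<longrightarrow> (\<forall>x\<in>esub e i. eH e (Suc i) x = eH e i x))"

definition embeds_fully_ext :: "'a nd_inst set \<Rightarrow> ('a set \<times> ('a \<Rightarrow> 'a \<Rightarrow> real)) set \<Rightarrow>
    real \<Rightarrow> 'a emb_alg pmf \<Rightarrow> bool" where
  "embeds_fully_ext P MM \<alpha> Emb \<longleftrightarrow> (\<forall>E\<in>set_pmf Emb. online_emb_alg E) \<and>
     (\<forall>I\<in>P.
        (\<forall>E\<in>set_pmf Emb.
           (tgt (E (verts I, dist I, reqs I)), tdist (E (verts I, dist I, reqs I))) \<in> MM \<and>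
           is_online_emb (verts I) (dist I) (reqs I) (tgt (E (verts I, dist I, reqs I)))
             (tdist (E (verts I, dist I, reqs I))) (emap (E (verts I, dist I, reqs I))) \<and>
           fully_ext (verts I) (dist I) (reqs I) (E (verts I, dist I, reqs I))) \<and>
        (\<forall>i<length (reqs I). \<forall>u\<in>verts I. \<forall>v\<in>verts I.
           (\<integral>\<^sup>+ E. ennreal (tdist (E (verts I, dist I, reqs I))
                      (eF (E (verts I, dist I, reqs I)) i u) (eF (E (verts I, dist I, reqs I)) i v))
              \<partial>measure_pmf Emb) \<le> ennreal (\<alpha> * dist I u v)))"

definition induced :: "'a nd_inst \<Rightarrow> 'a set \<Rightarrow> ('a \<Rightarrow> 'a \<Rightarrow> real) \<Rightarrow> (nat \<Rightarrow> 'a \<Rightarrow> 'a) \<Rightarrow> 'a nd_inst" where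
  "induced I M dM f = \<lparr>verts = M, dist = dM,
     reqs = map (\<lambda>i. f i ` (reqs I ! i)) [0..<length (reqs I)],
     feas = (\<lambda>i Cs. feas I i (map (map (\<lambda>p. inv_into (cum (reqs I) i) (f i) ` p)) Cs)),
     load = load I\<rparr>"

definition compatible :: "'a nd_inst set \<Rightarrow> 'a emb_alg pmf \<Rightarrow> 'a nd_alg pmf \<Rightarrow> bool" where
  "compatible P Emb Alg \<longleftrightarrow> (\<forall>I\<in>P. \<forall>E\<in>set_pmf Emb. \<forall>A\<in>set_pmf Alg.
     (let e = E (verts I, dist I, reqs I);
          J = induced I (tgt e) (tdist e) (emap e)
      in \<forall>i<length (reqs I). \<Union> (fst (A J i)) \<subseteq> esub e i))"

definition nd_problem :: "'a nd_inst set \<Rightarrow> bool" where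
  "nd_problem P \<longleftrightarrow> (\<forall>I\<in>P. wf_inst I) \<and>
     (\<forall>I\<in>P. \<forall>M dM f. fin_metric M dM \<and> is_online_emb (verts I) (dist I) (reqs I) M dM f
        \<longrightarrow> induced I M dM f \<in> P)"

end

theory Submission
  imports Defs
begin

lemma edges_iff: "e \<in> edges S \<longleftrightarrow> (\<exists>u v. e = {u, v} \<and> u \<in> S \<and> v \<in> S \<and> u \<noteq> v)"
  unfolding edges_def by blast

lemma edge_len_eq:
  assumes "d u v = d v u" "u \<noteq> v"
  shows "edge_len d {u, v} = d u v"
  unfolding edge_len_def
proof (rule the_equality)
  show "\<exists>a b. {u, v} = {a, b} \<and> a \<noteq> b \<and> d u v = d a b" using assms by blast
next
  fix l assume "\<exists>a b. {u, v} = {a, b} \<and> a \<noteq> b \<and> l = d a b"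
  then obtain a b where "{u, v} = {a, b}" "l = d a b" by blast
  then show "l = d u v" using assms by (auto simp: doubleton_eq_iff)
qed

lemma edge_len_metric:
  assumes "fin_metric V d" "u \<in> V" "v \<in> V" "u \<noteq> v"
  shows "edge_len d {u, v} = d u v"
  using assms by (intro edge_len_eq) (auto simp: fin_metric_def)

lemma edge_len_nonneg:
  assumes "fin_metric V d" "e \<in> edges V"
  shows "0 \<le> edge_len d e"
proof -
  obtain u v where "e = {u, v}" "u \<in> V" "v \<in> V" "u \<noteq> v" using assms(2) by (auto simp: edges_iff)
  then show ?thesis using edge_len_metric[OF assms(1)] assms(1) by (auto simp: fin_metric_def)
qed

definition pe :: "('a \<Rightarrow> 'b) \<Rightarrow> 'a set set \<Rightarrow> 'b set set" where
  "pe h R = {h ` e | e. e \<in> R \<and> card (h ` e) = 2}"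

lemma pe_edges:
  assumes "\<And>e. e \<in> R \<Longrightarrow> h ` e \<subseteq> S"
  shows "pe h R \<subseteq> edges S"
proof
  fix x assume "x \<in> pe h R"
  then obtain e where e: "e \<in> R" "x = h ` e" "card (h ` e) = 2" unfolding pe_def by blast
  then obtain a b where "h ` e = {a, b}" "a \<noteq> b" by (auto simp: card_2_iff)
  then show "x \<in> edges S" using assms[OF e(1)] e by (auto simp: edges_iff)
qed

lemma pe_path:
  assumes "(u, v) \<in> (edge_rel R)\<^sup>*"
  shows "(h u, h v) \<in> (edge_rel (pe h R))\<^sup>*"
  using assms
proof (induction rule: rtrancl_induct)
  case base then show ?case by simp
next
  case (step y z)
  show ?case
  proof (cases "h y = h z")
    case True then show ?thesis using step by simp
  next
    case False
    have "{y, z} \<in> R" using step(2) by (simp add: edge_rel_def)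
    moreover have "h ` {y, z} = {h y, h z}" by simp
    ultimately have "{h y, h z} \<in> pe h R" using False unfolding pe_def
      by (smt (verit, ccfv_threshold) card_2_iff mem_Collect_eq)
    then have "(h y, h z) \<in> edge_rel (pe h R)" by (simp add: edge_rel_def)
    then show ?thesis using step(3) by (meson rtrancl.rtrancl_into_rtrancl)
  qed
qed

lemma pe_cong:
  assumes "\<And>e x. e \<in> R \<Longrightarrow> x \<in> e \<Longrightarrow> h x = h' x"
  shows "pe h R = pe h' R"
proof -
  have "\<And>e. e \<in> R \<Longrightarrow> h ` e = h' ` e" using assms by (meson image_cong)
  then show ?thesis unfolding pe_def by (smt (verit) Collect_cong)
qed

lemma cum_mono: "j \<le> i \<Longrightarrow> cum Z j \<subseteq> cum Z i"
  unfolding cum_def by (auto intro: order_trans)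

lemma cum_take:
  assumes "take (Suc i) Z = take (Suc i) Z'" "i < length Z" "i < length Z'"
  shows "cum Z i = cum Z' i"
proof -
  have "\<And>j. j \<le> i \<Longrightarrow> Z ! j = Z' ! j"
    by (metis assms(1) le_imp_less_Suc nth_take)
  then show ?thesis unfolding cum_def using assms by auto
qed

lemma cum_sub: "(\<forall>Z\<in>set Zs. Z \<subseteq> V) \<Longrightarrow> cum Zs i \<subseteq> V"
  unfolding cum_def by auto

lemma cum_induced:
  assumes "is_online_emb V d Z M dM f" "i < length Z"
  shows "cum (map (\<lambda>i. f i ` (Z ! i)) [0..<length Z]) i = f i ` cum Z i"
proof -
  have eq: "\<And>j z. j \<le> i \<Longrightarrow> z \<in> Z ! j \<Longrightarrow> f j z = f i z"
  proof -
    fix j z assume "j \<le> i" "z \<in> Z ! j"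
    then have "z \<in> cum Z j" using assms(2) unfolding cum_def by auto
    then show "f j z = f i z" using assms \<open>j \<le> i\<close> unfolding is_online_emb_def by auto
  qed
  show ?thesis unfolding cum_def using assms(2)
    by (auto simp: eq)
qed


definition rho_sub :: "nat \<Rightarrow> (nat set \<Rightarrow> real) \<Rightarrow> bool" where
  "rho_sub r \<rho> \<longleftrightarrow> (\<forall>A B. A \<noteq> {} \<longrightarrow> B \<noteq> {} \<longrightarrow> A \<subseteq> {..<r} \<longrightarrow> B \<subseteq> {..<r} \<longrightarrow>
     \<rho> (A \<union> B) \<le> \<rho> A + \<rho> B \<and> 0 \<le> \<rho> A)"

lemma load_rho_sub:
  assumes "load_fn r (load I)"
  shows "rho_sub r (rho I)"
  unfolding rho_sub_def
proof (intro allI impI)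
  fix A B :: "nat set"
  assume A: "A \<noteq> {}" "B \<noteq> {}" "A \<subseteq> {..<r}" "B \<subseteq> {..<r}"
  have fA: "finite A" "finite B" using A finite_subset by blast+
  define m where "m = Max (A \<union> B)"
  have mem: "m \<in> A \<union> B" unfolding m_def using fA A by (intro Max_in) auto
  have mr: "m < r" using mem A by blast
  have Am: "A \<subseteq> {0..m}" "B \<subseteq> {0..m}" unfolding m_def using fA by (auto intro: Max_ge)
  have MA: "Max A \<le> m" "Max B \<le> m" unfolding m_def using fA A by (simp_all add: Max_mono)
  have MAr: "Max A < r" "Max B < r" using MA mr by auto
  have AMA: "A \<subseteq> {0..Max A}" "B \<subseteq> {0..Max B}" using fA by auto
  note L = assms[unfolded load_fn_def, rule_format]
  note L1 = L[THEN conjunct1, rule_format]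
  note L2 = L[THEN conjunct2, THEN conjunct1, rule_format]
  note L3 = L[THEN conjunct2, THEN conjunct2, THEN conjunct1, rule_format]
  note L4 = L[THEN conjunct2, THEN conjunct2, THEN conjunct2, rule_format]
  have e1: "load I m A = load I (Max A) A" by (rule L4[OF MAr(1) MA(1) mr AMA(1)])
  have e2: "load I m B = load I (Max B) B" by (rule L4[OF MAr(2) MA(2) mr AMA(2)])
  have "load I m (A \<union> B) \<le> load I m A + load I m B" by (rule L1[OF mr Am])
  then have 1: "rho I (A \<union> B) \<le> rho I A + rho I B" unfolding rho_def m_def[symmetric] using e1 e2 by simp
  have "load I (Max A) {} \<le> load I (Max A) A" by (rule L2[OF MAr(1) _ AMA(1)]) simp
  moreover have "load I (Max A) {} = 0" using L3[OF MAr(1), of "{}"] by simp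
  ultimately have "0 \<le> rho I A" unfolding rho_def by simp
  with 1 show "rho I (A \<union> B) \<le> rho I A + rho I B \<and> 0 \<le> rho I A" by simp
qed

lemma rho_nonneg: "rho_sub r \<rho> \<Longrightarrow> A \<noteq> {} \<Longrightarrow> A \<subseteq> {..<r} \<Longrightarrow> 0 \<le> \<rho> A"
  unfolding rho_sub_def by blast

lemma rho_union:
  assumes "rho_sub r \<rho>" "finite K" "K \<noteq> {}" "\<And>k. k \<in> K \<Longrightarrow> A k \<noteq> {} \<and> A k \<subseteq> {..<r}"
  shows "\<rho> (\<Union>k\<in>K. A k) \<le> (\<Sum>k\<in>K. \<rho> (A k))"
  using assms(2,3,4)
proof (induction K rule: finite_ne_induct)
  case (singleton x) then show ?case by simp
next
  case (insert x F)
  have P: "\<And>k. k \<in> F \<Longrightarrow> A k \<noteq> {} \<and> A k \<subseteq> {..<r}" using insert.prems by blast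
  have IH: "\<rho> (\<Union>k\<in>F. A k) \<le> (\<Sum>k\<in>F. \<rho> (A k))" by (rule insert.IH[OF P])
  have a1: "A x \<noteq> {}" "A x \<subseteq> {..<r}" using insert.prems by blast+
  obtain y where "y \<in> F" using insert.hyps(2) by blast
  then have a2: "(\<Union>k\<in>F. A k) \<noteq> {}" using P by blast
  have a3: "(\<Union>k\<in>F. A k) \<subseteq> {..<r}" using P by blast
  have "\<rho> (\<Union>k\<in>insert x F. A k) = \<rho> (A x \<union> (\<Union>k\<in>F. A k))" by simp
  also have "\<dots> \<le> \<rho> (A x) + \<rho> (\<Union>k\<in>F. A k)"
    using assms(1)[unfolded rho_sub_def, rule_format, OF a1(1) a2 a1(2) a3] by (rule conjunct1)
  also have "\<dots> \<le> \<rho> (A x) + (\<Sum>k\<in>F. \<rho> (A k))" using IH by simp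
  also have "\<dots> = (\<Sum>k\<in>insert x F. \<rho> (A k))" using insert.hyps(1,3) by simp
  finally show ?case .
qed

lemma cost_map:
  fixes R :: "nat \<Rightarrow> 'a set set" and h :: "'a \<Rightarrow> 'b"
  assumes rs: "rho_sub r \<rho>" and fin: "finite (\<Union>i<r. R i)"
    and len: "\<And>e. e \<in> (\<Union>i<r. R i) \<Longrightarrow> card (h ` e) = 2 \<Longrightarrow> len2 (h ` e) \<le> w e"
    and wnn: "\<And>e. e \<in> (\<Union>i<r. R i) \<Longrightarrow> 0 \<le> w e"
    and lnn: "\<And>e'. e' \<in> (\<Union>i<r. pe h (R i)) \<Longrightarrow> 0 \<le> len2 e'"
  shows "(\<Sum>e'\<in>(\<Union>i<r. pe h (R i)). len2 e' * \<rho> {i. i < r \<and> e' \<in> pe h (R i)})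
       \<le> (\<Sum>e\<in>(\<Union>i<r. R i). w e * \<rho> {i. i < r \<and> e \<in> R i})"
proof -
  define U where "U = (\<Union>i<r. R i)"
  define U' where "U' = (\<Union>i<r. pe h (R i))"
  define U2 where "U2 = {e \<in> U. card (h ` e) = 2}"
  define S where "S e = {i. i < r \<and> e \<in> R i}" for e
  define f where "f e = w e * \<rho> (S e)" for e
  have U'eq: "U' = (\<lambda>e. h ` e) ` U2" unfolding U'_def U2_def U_def pe_def by blast
  have finU2: "finite U2" using fin unfolding U2_def U_def by simp
  have finU': "finite U'" using U'eq finU2 by simp
  have Sne: "\<And>e. e \<in> U \<Longrightarrow> S e \<noteq> {} \<and> S e \<subseteq> {..<r}" unfolding S_def U_def by auto
  have fnn: "0 \<le> f e" if e: "e \<in> U" for e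
  proof -
    have "0 \<le> w e" using wnn e unfolding U_def by blast
    moreover have "0 \<le> \<rho> (S e)" using rho_nonneg[OF rs] Sne[OF e] by blast
    ultimately show ?thesis unfolding f_def by simp
  qed
  have step: "len2 e' * \<rho> {i. i < r \<and> e' \<in> pe h (R i)} \<le> (\<Sum>e\<in>{x. x \<in> U2 \<and> h ` x = e'}. f e)"
    if e': "e' \<in> U'" for e'
  proof -
    define G where "G = {x. x \<in> U2 \<and> h ` x = e'}"
    have Gfin: "finite G" unfolding G_def using finU2 by simp
    have Gne: "G \<noteq> {}" unfolding G_def using e' U'eq by auto
    have Seq: "{i. i < r \<and> e' \<in> pe h (R i)} = (\<Union>e\<in>G. S e)"
      unfolding G_def S_def U2_def U_def pe_def by blast
    have GU: "G \<subseteq> U" unfolding G_def U2_def by auto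
    have "\<rho> {i. i < r \<and> e' \<in> pe h (R i)} \<le> (\<Sum>e\<in>G. \<rho> (S e))"
      unfolding Seq using rho_union[OF rs Gfin Gne] Sne GU by blast
    then have "len2 e' * \<rho> {i. i < r \<and> e' \<in> pe h (R i)} \<le> len2 e' * (\<Sum>e\<in>G. \<rho> (S e))"
      by (rule mult_left_mono) (use lnn e' in \<open>auto simp: U'_def\<close>)
    also have "\<dots> = (\<Sum>e\<in>G. len2 (h ` e) * \<rho> (S e))"
      by (simp add: sum_distrib_left G_def)
    also have "\<dots> \<le> (\<Sum>e\<in>G. f e)"
    proof (rule sum_mono)
      fix e assume "e \<in> G"
      then have "e \<in> U" "card (h ` e) = 2" unfolding G_def U2_def by auto
      then have "len2 (h ` e) \<le> w e" using len[of e] unfolding U_def by blast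
      moreover have "0 \<le> \<rho> (S e)" using rho_nonneg[OF rs] Sne[OF \<open>e \<in> U\<close>] by blast
      ultimately show "len2 (h ` e) * \<rho> (S e) \<le> f e" unfolding f_def by (rule mult_right_mono)
    qed
    finally show ?thesis unfolding G_def .
  qed
  have "(\<Sum>e'\<in>U'. len2 e' * \<rho> {i. i < r \<and> e' \<in> pe h (R i)}) \<le> (\<Sum>e'\<in>U'. \<Sum>e\<in>{x. x \<in> U2 \<and> h ` x = e'}. f e)"
    using step by (rule sum_mono)
  also have "\<dots> = (\<Sum>e\<in>U2. f e)"
    by (rule sum.group[OF finU2 finU']) (auto simp: U'eq)
  also have "\<dots> \<le> (\<Sum>e\<in>U. f e)"
    by (rule sum_mono2) (use fin fnn in \<open>auto simp: U_def U2_def\<close>)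
  finally show ?thesis unfolding U_def U'_def f_def S_def .
qed


definition emb_of :: "'a emb_alg \<Rightarrow> 'a nd_inst \<Rightarrow> 'a emb" where
  "emb_of E I = E (verts I, dist I, reqs I)"

definition ind :: "'a emb_alg \<Rightarrow> 'a nd_inst \<Rightarrow> 'a nd_inst" where
  "ind E I = induced I (tgt (emb_of E I)) (tdist (emb_of E I)) (emap (emb_of E I))"

definition pull :: "'a emb_alg \<Rightarrow> 'a nd_alg \<Rightarrow> 'a nd_alg" where
  "pull E A I i = (pe (eH (emb_of E I) i) (fst (A (ind E I) i)),
     map (\<lambda>p. inv_into (cum (reqs I) i) (emap (emb_of E I) i) ` p) (snd (A (ind E I) i)))"

lemma ind_simps:
  "verts (ind E I) = tgt (emb_of E I)" "dist (ind E I) = tdist (emb_of E I)"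
  "reqs (ind E I) = map (\<lambda>i. emap (emb_of E I) i ` (reqs I ! i)) [0..<length (reqs I)]"
  "length (reqs (ind E I)) = length (reqs I)"
  "feas (ind E I) = (\<lambda>i Cs. feas I i (map (map (\<lambda>p. inv_into (cum (reqs I) i) (emap (emb_of E I) i) ` p)) Cs))"
  "load (ind E I) = load I"
  by (simp_all add: ind_def induced_def)

lemma rho_ind: "rho (ind E I) = rho I"
  by (simp add: rho_def[abs_def] ind_simps)

lemma take_run: "i < length (reqs I) \<Longrightarrow> take (Suc i) (run A I) = map (A I) [0..<Suc i]"
  unfolding run_def by (simp add: take_map)

lemma online_pull:
  assumes E: "online_emb_alg E" and A: "online_alg A"
  shows "online_alg (pull E A)"
  unfolding online_alg_def
proof (intro allI impI)
  fix I I' :: "'a nd_inst" and i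
  assume pq: "prefix_eq I I' i"
  define Z where "Z = reqs I"
  define Z' where "Z' = reqs I'"
  have vd: "verts I = verts I'" "dist I = dist I'" and il: "i < length Z" "i < length Z'"
    and tk: "take (Suc i) Z = take (Suc i) Z'"
    and fl: "\<And>j. j \<le> i \<Longrightarrow> feas I j = feas I' j \<and> load I j = load I' j"
    using pq unfolding prefix_eq_def Z_def Z'_def by auto
  have tkj: "\<And>j. j \<le> i \<Longrightarrow> take (Suc j) Z = take (Suc j) Z'"
    by (metis tk Suc_le_mono min.absorb1 take_take)
  have eo: "emb_of E I = E (verts I, dist I, Z)" "emb_of E I' = E (verts I, dist I, Z')"
    unfolding emb_of_def Z_def Z'_def vd by simp_all
  note E1 = E[unfolded online_emb_alg_def, THEN conjunct1, rule_format]
  note E2 = E[unfolded online_emb_alg_def, THEN conjunct2, rule_format]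
  have same: "emap (emb_of E I) j = emap (emb_of E I') j \<and> esub (emb_of E I) j = esub (emb_of E I') j \<and>
      eF (emb_of E I) j = eF (emb_of E I') j \<and> eH (emb_of E I) j = eH (emb_of E I') j" if "j \<le> i" for j
    unfolding eo by (rule E2) (use that il tkj in auto)
  have tg: "tgt (emb_of E I) = tgt (emb_of E I')" "tdist (emb_of E I) = tdist (emb_of E I')"
    unfolding eo using E1 by blast+
  have cumj: "\<And>j. j \<le> i \<Longrightarrow> cum Z j = cum Z' j"
    using cum_take tkj il by (metis le_less_trans)
  have nthj: "\<And>j. j \<le> i \<Longrightarrow> Z ! j = Z' ! j"
    by (metis tk le_imp_less_Suc nth_take)
  have "prefix_eq (ind E I) (ind E I') i"
    unfolding prefix_eq_def
  proof (intro conjI allI impI)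
    show "verts (ind E I) = verts (ind E I')" "dist (ind E I) = dist (ind E I')"
      using tg by (simp_all add: ind_simps)
    show "i < length (reqs (ind E I))" "i < length (reqs (ind E I'))"
      using il by (simp_all add: ind_simps Z_def Z'_def)
    show "take (Suc i) (reqs (ind E I)) = take (Suc i) (reqs (ind E I'))"
      unfolding ind_simps Z_def[symmetric] Z'_def[symmetric] using il
      by (simp add: take_map same nthj)
    fix j assume j: "j \<le> i"
    show "feas (ind E I) j = feas (ind E I') j"
      unfolding ind_simps Z_def[symmetric] Z'_def[symmetric] using fl[OF j] same[OF j] cumj[OF j] by simp
    show "load (ind E I) j = load (ind E I') j"
      unfolding ind_simps using fl[OF j] by simp
  qed
  then have "A (ind E I) i = A (ind E I') i" using A unfolding online_alg_def by blast
  then show "pull E A I i = pull E A I' i"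
    unfolding pull_def Z_def[symmetric] Z'_def[symmetric] using same[of i] cumj[of i] by simp
qed


locale ctx =
  fixes I :: "'a nd_inst" and E :: "'a emb_alg"
  assumes wf: "wf_inst I"
  and oe: "is_online_emb (verts I) (dist I) (reqs I) (tgt (emb_of E I)) (tdist (emb_of E I)) (emap (emb_of E I))"
  and fe: "fully_ext (verts I) (dist I) (reqs I) (emb_of E I)"
  and fm: "fin_metric (tgt (emb_of E I)) (tdist (emb_of E I))"
begin

abbreviation "e \<equiv> emb_of E I"
abbreviation "r \<equiv> length (reqs I)"
abbreviation "Z \<equiv> reqs I"
abbreviation "V \<equiv> verts I"
abbreviation "d \<equiv> dist I"
abbreviation "J \<equiv> ind E I"
abbreviation "f \<equiv> emap (emb_of E I)"
abbreviation "g i \<equiv> inv_into (cum (reqs I) i) (emap (emb_of E I) i)"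

lemma metV: "fin_metric V d" using wf unfolding wf_inst_def by blast
lemma loadI: "load_fn r (load I)" using wf unfolding wf_inst_def by blast
lemma rsI: "rho_sub r (rho I)" by (rule load_rho_sub[OF loadI])

lemma cumJ: "i < r \<Longrightarrow> cum (reqs J) i = f i ` cum Z i"
  unfolding ind_simps by (rule cum_induced[OF oe])

lemma cumV: "cum Z i \<subseteq> V"
  by (rule cum_sub) (use wf in \<open>simp add: wf_inst_def\<close>)

lemma Hf: "i < r \<Longrightarrow> z \<in> cum Z i \<Longrightarrow> eH e i (f i z) = z \<and> f i z \<in> esub e i"
  using fe unfolding fully_ext_def by blast

lemma gf: "i < r \<Longrightarrow> z \<in> cum Z i \<Longrightarrow> g i (f i z) = z"
proof -
  assume i: "i < r" and z: "z \<in> cum Z i"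
  have "inj_on (f i) (cum Z i)"
    by (rule inj_on_inverseI[where g = "eH e i"]) (use Hf[OF i] in blast)
  then show ?thesis using z by (rule inv_into_f_f)
qed

lemma fij: "j \<le> i \<Longrightarrow> i < r \<Longrightarrow> z \<in> cum Z j \<Longrightarrow> f i z = f j z"
  using oe unfolding is_online_emb_def by blast

lemma HV: "i < r \<Longrightarrow> x \<in> esub e i \<Longrightarrow> eH e i x \<in> V"
  using fe unfolding fully_ext_def by blast

lemma Hne: "i < r \<Longrightarrow> x \<in> esub e i \<Longrightarrow> y \<in> esub e i \<Longrightarrow> d (eH e i x) (eH e i y) \<le> tdist e x y"
  using fe unfolding fully_ext_def by blast

lemma esub_tgt: "i < r \<Longrightarrow> esub e i \<subseteq> tgt e"
  using fe unfolding fully_ext_def by blast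

lemma esub_mono: "j \<le> i \<Longrightarrow> i < r \<Longrightarrow> esub e j \<subseteq> esub e i"
proof (induction i)
  case 0 then show ?case by simp
next
  case (Suc i)
  show ?case
  proof (cases "j = Suc i")
    case True then show ?thesis by simp
  next
    case False
    then have "esub e j \<subseteq> esub e i" using Suc by simp
    moreover have "esub e i \<subseteq> esub e (Suc i)" using fe Suc.prems unfolding fully_ext_def by blast
    ultimately show ?thesis by blast
  qed
qed

lemma H_ext: "j \<le> i \<Longrightarrow> i < r \<Longrightarrow> x \<in> esub e j \<Longrightarrow> eH e i x = eH e j x"
proof (induction i)
  case 0 then show ?case by simp
next
  case (Suc i)
  show ?case
  proof (cases "j = Suc i")
    case True then show ?thesis by simp
  next
    case False
    then have 1: "eH e i x = eH e j x" "j \<le> i" using Suc by auto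
    then have "x \<in> esub e i" using esub_mono[of j i] Suc.prems by auto
    then have "eH e (Suc i) x = eH e i x" using fe Suc.prems unfolding fully_ext_def by blast
    then show ?thesis using 1 by simp
  qed
qed

lemma FT: "i < r \<Longrightarrow> u \<in> V \<Longrightarrow> eF e i u \<in> tgt e"
  using fe unfolding fully_ext_def by blast

lemma Ff: "i < r \<Longrightarrow> z \<in> cum Z i \<Longrightarrow> eF e i z = f i z"
  using fe unfolding fully_ext_def by blast

lemma edge_cumJ:
  assumes i: "i < r" and p: "p \<in> edges (cum (reqs J) i)"
  obtains z1 z2 where "p = {f i z1, f i z2}" "z1 \<in> cum Z i" "z2 \<in> cum Z i" "z1 \<noteq> z2"
proof -
  obtain a b where "p = {a, b}" "a \<in> f i ` cum Z i" "b \<in> f i ` cum Z i" "a \<noteq> b"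
    using p cumJ[OF i] by (auto simp: edges_iff)
  then show ?thesis using that by blast
qed

lemma pull_feasible:
  assumes feJ: "feasible J (run A J)" and comp: "\<And>i. i < r \<Longrightarrow> \<Union> (fst (A J i)) \<subseteq> esub e i"
  shows "feasible I (run (pull E A) I)"
proof -
  have lenJ: "length (run A J) = r" by (simp add: run_def ind_simps)
  have FJ: "\<And>i. i < r \<Longrightarrow> fst (A J i) \<subseteq> edges (verts J) \<and>
        set (snd (A J i)) \<subseteq> edges (cum (reqs J) i) \<and>
        feas J i (map snd (take (Suc i) (run A J))) \<and>
        (\<forall>p\<in>set (snd (A J i)). connected_in (fst (A J i)) p)"
  proof -
    fix i assume i: "i < r"
    have FJ0: "\<And>i. i < length (run A J) \<Longrightarrow> fst (run A J ! i) \<subseteq> edges (verts J) \<and>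
        set (snd (run A J ! i)) \<subseteq> edges (cum (reqs J) i) \<and>
        feas J i (map snd (take (Suc i) (run A J))) \<and>
        (\<forall>p\<in>set (snd (run A J ! i)). connected_in (fst (run A J ! i)) p)"
      using feJ unfolding feasible_def by blast
    have rJ: "run A J ! i = A J i" using i by (simp add: run_def ind_simps)
    have "i < length (run A J)" using lenJ i by simp
    from FJ0[OF this] show "fst (A J i) \<subseteq> edges (verts J) \<and>
        set (snd (A J i)) \<subseteq> edges (cum (reqs J) i) \<and>
        feas J i (map snd (take (Suc i) (run A J))) \<and>
        (\<forall>p\<in>set (snd (A J i)). connected_in (fst (A J i)) p)" unfolding rJ .
  qed
  show ?thesis unfolding feasible_def
  proof (intro conjI allI impI ballI)
    show "length (run (pull E A) I) = r" by (simp add: run_def)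
    fix i assume "i < length (run (pull E A) I)"
    then have i: "i < r" by (simp add: run_def)
    have ri: "run (pull E A) I ! i = pull E A I i" using i by (simp add: run_def)
    note F = FJ[OF i]
    show "fst (run (pull E A) I ! i) \<subseteq> edges V"
      unfolding ri pull_def fst_conv
    proof (rule pe_edges)
      fix x assume "x \<in> fst (A J i)"
      then have "x \<subseteq> esub e i" using comp[OF i] by blast
      then show "eH e i ` x \<subseteq> V" using HV[OF i] by blast
    qed
    show "set (snd (run (pull E A) I ! i)) \<subseteq> edges (cum Z i)"
    proof
      fix q assume "q \<in> set (snd (run (pull E A) I ! i))"
      then obtain p where p: "p \<in> set (snd (A J i))" "q = g i ` p"
        unfolding ri pull_def by auto
      then have "p \<in> edges (cum (reqs J) i)" using F by blast
      then obtain z1 z2 where z: "p = {f i z1, f i z2}" "z1 \<in> cum Z i" "z2 \<in> cum Z i" "z1 \<noteq> z2"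
        using edge_cumJ[OF i] by blast
      have "q = {z1, z2}" using p(2) z gf[OF i] by simp
      then show "q \<in> edges (cum Z i)" using z by (auto simp: edges_iff)
    qed
    have "map snd (take (Suc i) (run (pull E A) I)) = map (map (\<lambda>p. g i ` p)) (map snd (take (Suc i) (run A J)))"
    proof -
      have "take (Suc i) (run A J) = map (A J) [0..<Suc i]" using i by (simp add: take_run ind_simps)
      moreover have "take (Suc i) (run (pull E A) I) = map (pull E A I) [0..<Suc i]" using i by (simp add: take_run)
      moreover have "snd (pull E A I j) = map (\<lambda>p. g i ` p) (snd (A J j))" if j: "j < Suc i" for j
      proof -
        have ji: "j \<le> i" "j < r" using j i by auto
        have "g j ` p = g i ` p" if p: "p \<in> set (snd (A J j))" for p
        proof -
          have "p \<in> edges (cum (reqs J) j)" using FJ[OF ji(2)] p by blast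
          then obtain z1 z2 where z: "p = {f j z1, f j z2}" "z1 \<in> cum Z j" "z2 \<in> cum Z j"
            using edge_cumJ[OF ji(2)] by blast
          have zi: "z1 \<in> cum Z i" "z2 \<in> cum Z i" using z cum_mono[OF ji(1), of Z] by auto
          have "f i z1 = f j z1" "f i z2 = f j z2" using fij[OF ji(1) i] z by auto
          then have p2: "p = {f i z1, f i z2}" using z(1) by simp
          have "g i ` p = {z1, z2}" unfolding p2 using zi gf[OF i] by simp
          moreover have "g j ` p = {z1, z2}" using z gf[OF ji(2)] by simp
          ultimately show ?thesis by simp
        qed
        then show ?thesis unfolding pull_def by simp
      qed
      ultimately show ?thesis by simp
    qed
    moreover have "feas J i (map snd (take (Suc i) (run A J)))" using F by blast
    ultimately show "feas I i (map snd (take (Suc i) (run (pull E A) I)))"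
      unfolding ind_simps by simp
  next
    fix i q assume "i < length (run (pull E A) I)" and q: "q \<in> set (snd (run (pull E A) I ! i))"
    then have i: "i < r" by (simp add: run_def)
    have ri: "run (pull E A) I ! i = pull E A I i" using i by (simp add: run_def)
    note F = FJ[OF i]
    obtain p where p: "p \<in> set (snd (A J i))" "q = g i ` p"
      using q unfolding ri pull_def by auto
    then have "p \<in> edges (cum (reqs J) i)" using F by blast
    then obtain z1 z2 where z: "p = {f i z1, f i z2}" "z1 \<in> cum Z i" "z2 \<in> cum Z i"
      using edge_cumJ[OF i] by blast
    have q2: "q = {z1, z2}" using p(2) z gf[OF i] by simp
    have "connected_in (fst (A J i)) p" using F p by blast
    then obtain u v where uv: "p = {u, v}" "(u, v) \<in> (edge_rel (fst (A J i)))\<^sup>*"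
      unfolding connected_in_def by blast
    have path: "(eH e i u, eH e i v) \<in> (edge_rel (pe (eH e i) (fst (A J i))))\<^sup>*"
      by (rule pe_path[OF uv(2)])
    have Hz: "eH e i (f i z1) = z1" "eH e i (f i z2) = z2" using Hf[OF i] z by auto
    have "{eH e i u, eH e i v} = {z1, z2}"
      using uv(1) z(1) Hz by (auto simp: doubleton_eq_iff)
    then show "connected_in (fst (run (pull E A) I ! i)) q"
      unfolding ri pull_def fst_conv connected_in_def q2 using path by metis
  qed
qed


lemma finite_edges: "finite S \<Longrightarrow> finite (edges S)"
  by (rule finite_subset[of _ "Pow S"]) (auto simp: edges_iff)

lemma pull_cost:
  assumes feJ: "feasible J (run A J)" and comp: "\<And>i. i < r \<Longrightarrow> \<Union> (fst (A J i)) \<subseteq> esub e i"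
  shows "cost I (run (pull E A) I) \<le> cost J (run A J)"
proof -
  define H where "H = eH e (r - 1)"
  define R where "R i = fst (A J i)" for i
  have lenJ: "length (run A J) = r" by (simp add: run_def ind_simps)
  have lenI: "length (run (pull E A) I) = r" by (simp add: run_def)
  have RE: "R i \<subseteq> edges (tgt e)" if i: "i < r" for i
  proof -
    have "i < length (run A J)" using lenJ i by simp
    then have "fst (run A J ! i) \<subseteq> edges (verts J)" using feJ unfolding feasible_def by blast
    moreover have "run A J ! i = A J i" using i by (simp add: run_def ind_simps)
    ultimately show ?thesis unfolding R_def by (simp add: ind_simps)
  qed
  have fstP: "fst (run (pull E A) I ! i) = pe H (R i)" if i: "i < r" for i
  proof -
    have "fst (run (pull E A) I ! i) = pe (eH e i) (R i)" using i by (simp add: run_def pull_def R_def)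
    also have "\<dots> = pe H (R i)"
    proof (rule pe_cong)
      fix x y assume "x \<in> R i" "y \<in> x"
      then have "y \<in> esub e i" using comp[OF i] unfolding R_def by blast
      then show "eH e i y = H y" unfolding H_def using H_ext[of i "r - 1" y] i by simp
    qed
    finally show ?thesis .
  qed
  have fstJ: "fst (run A J ! i) = R i" if i: "i < r" for i
    using i by (simp add: run_def R_def ind_simps)
  have c1: "cost I (run (pull E A) I) = (\<Sum>e'\<in>(\<Union>i<r. pe H (R i)). edge_len d e' * rho I {i. i < r \<and> e' \<in> pe H (R i)})"
  proof -
    have U: "(\<Union>i<length (run (pull E A) I). fst (run (pull E A) I ! i)) = (\<Union>i<r. pe H (R i))"
      unfolding lenI using fstP by simp
    have S: "\<And>e'. {i. i < length (run (pull E A) I) \<and> e' \<in> fst (run (pull E A) I ! i)} = {i. i < r \<and> e' \<in> pe H (R i)}"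
      unfolding lenI using fstP by auto
    show ?thesis unfolding cost_def U S ..
  qed
  have c2: "cost J (run A J) = (\<Sum>x\<in>(\<Union>i<r. R i). edge_len (tdist e) x * rho I {i. i < r \<and> x \<in> R i})"
  proof -
    have U: "(\<Union>i<length (run A J). fst (run A J ! i)) = (\<Union>i<r. R i)"
      unfolding lenJ using fstJ by simp
    have S: "\<And>x. {i. i < length (run A J) \<and> x \<in> fst (run A J ! i)} = {i. i < r \<and> x \<in> R i}"
      unfolding lenJ using fstJ by auto
    show ?thesis unfolding cost_def U S rho_ind by (simp add: ind_simps)
  qed
  have fin: "finite (\<Union>i<r. R i)"
  proof (rule finite_subset)
    show "(\<Union>i<r. R i) \<subseteq> edges (tgt e)" using RE by blast
    show "finite (edges (tgt e))" using fm unfolding fin_metric_def by (simp add: finite_edges)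
  qed
  show ?thesis unfolding c1 c2
  proof (rule cost_map[OF rsI fin])
    fix x assume x: "x \<in> (\<Union>i<r. R i)" and c: "card (H ` x) = 2"
    then obtain i where i: "i < r" "x \<in> R i" by blast
    have "x \<in> edges (tgt e)" using RE[OF i(1)] i(2) by blast
    then obtain a b where ab: "x = {a, b}" "a \<in> tgt e" "b \<in> tgt e" "a \<noteq> b"
      unfolding edges_iff by blast
    have r1: "r - 1 < r" "i \<le> r - 1" using i by auto
    have "x \<subseteq> esub e i" using comp[OF i(1)] i(2) unfolding R_def by blast
    then have abs: "a \<in> esub e (r - 1)" "b \<in> esub e (r - 1)" using esub_mono[OF r1(2) r1(1)] ab by auto
    have Hab: "H a \<noteq> H b" using c ab by auto
    have "edge_len d (H ` x) = d (H a) (H b)"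
      unfolding ab using edge_len_metric[OF metV] HV[OF r1(1)] abs Hab unfolding H_def by simp
    also have "\<dots> \<le> tdist e a b" unfolding H_def by (rule Hne[OF r1(1) abs])
    also have "\<dots> = edge_len (tdist e) x" unfolding ab using edge_len_metric[OF fm ab(2,3,4)] by simp
    finally show "edge_len d (H ` x) \<le> edge_len (tdist e) x" .
  next
    fix x assume "x \<in> (\<Union>i<r. R i)"
    then show "0 \<le> edge_len (tdist e) x" using RE edge_len_nonneg[OF fm] by blast
  next
    fix x assume "x \<in> (\<Union>i<r. pe H (R i))"
    then obtain i where i: "i < r" "x \<in> pe H (R i)" by blast
    have "pe H (R i) \<subseteq> edges V"
    proof (rule pe_edges)
      fix y assume "y \<in> R i"
      have r1: "r - 1 < r" "i \<le> r - 1" using i by auto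
      have "y \<subseteq> esub e i" using comp[OF i(1)] \<open>y \<in> R i\<close> unfolding R_def by blast
      then have "y \<subseteq> esub e (r - 1)" using esub_mono[OF r1(2) r1(1)] by blast
      then show "H ` y \<subseteq> V" unfolding H_def using HV[of "r - 1"] i(1) by auto
    qed
    then show "0 \<le> edge_len d x" using i edge_len_nonneg[OF metV] by blast
  qed
qed


definition push :: "'a resp list \<Rightarrow> 'a resp list" where
  "push sol = map (\<lambda>i. (pe (eF e (r - 1)) (fst (sol ! i)), map (\<lambda>p. eF e (r - 1) ` p) (snd (sol ! i)))) [0..<r]"

definition wt :: "'a set \<Rightarrow> real" where
  "wt x = (if card (eF e (r - 1) ` x) = 2 then edge_len (tdist e) (eF e (r - 1) ` x) else 0)"

lemma Fcum: "i < r \<Longrightarrow> z \<in> cum Z i \<Longrightarrow> eF e (r - 1) z = f i z"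
proof -
  assume i: "i < r" and z: "z \<in> cum Z i"
  have r1: "r - 1 < r" "i \<le> r - 1" using i by auto
  have "z \<in> cum Z (r - 1)" using z cum_mono[OF r1(2), of Z] by blast
  then have "eF e (r - 1) z = f (r - 1) z" by (rule Ff[OF r1(1)])
  also have "\<dots> = f i z" by (rule fij[OF r1(2) r1(1) z])
  finally show ?thesis .
qed

lemma wt_eq:
  assumes "i < r" "u \<in> V" "v \<in> V" "u \<noteq> v"
  shows "wt {u, v} = tdist e (eF e (r - 1) u) (eF e (r - 1) v)"
proof -
  have r1: "r - 1 < r" using assms by auto
  have T: "eF e (r - 1) u \<in> tgt e" "eF e (r - 1) v \<in> tgt e" using FT[OF r1] assms by auto
  show ?thesis
  proof (cases "eF e (r - 1) u = eF e (r - 1) v")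
    case True
    then show ?thesis unfolding wt_def using fm T unfolding fin_metric_def by simp
  next
    case False
    then show ?thesis unfolding wt_def using edge_len_metric[OF fm T False] by simp
  qed
qed

lemma push_feasible:
  assumes fe: "feasible I sol" and r0: "0 < r"
  shows "feasible J (push sol)"
proof -
  define F where "F = eF e (r - 1)"
  have r1: "r - 1 < r" using r0 by simp
  have lsol: "length sol = r" using fe unfolding feasible_def by simp
  have FI: "\<And>i. i < r \<Longrightarrow> fst (sol ! i) \<subseteq> edges V \<and>
        set (snd (sol ! i)) \<subseteq> edges (cum Z i) \<and>
        feas I i (map snd (take (Suc i) sol)) \<and>
        (\<forall>p\<in>set (snd (sol ! i)). connected_in (fst (sol ! i)) p)"
  proof -
    fix i assume i: "i < r"
    have "i < length sol" using i lsol by simp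
    then show "fst (sol ! i) \<subseteq> edges V \<and>
        set (snd (sol ! i)) \<subseteq> edges (cum Z i) \<and>
        feas I i (map snd (take (Suc i) sol)) \<and>
        (\<forall>p\<in>set (snd (sol ! i)). connected_in (fst (sol ! i)) p)"
      using fe unfolding feasible_def by blast
  qed
  have pi: "push sol ! i = (pe F (fst (sol ! i)), map (\<lambda>p. F ` p) (snd (sol ! i)))" if "i < r" for i
    using that unfolding push_def F_def by simp
  have pimg: "F ` p = {f i u, f i v} \<and> u \<in> cum Z i \<and> v \<in> cum Z i \<and> u \<noteq> v"
    if i: "i < r" and p: "p \<in> set (snd (sol ! i))" and uv: "p = {u, v}" "u \<noteq> v" for i p u v
  proof -
    have "p \<in> edges (cum Z i)" using FI[OF i] p by blast
    then have "u \<in> cum Z i" "v \<in> cum Z i" using uv by (auto simp: edges_iff doubleton_eq_iff)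
    then show ?thesis using uv Fcum[OF i] unfolding F_def by simp
  qed
  show ?thesis unfolding feasible_def
  proof (intro conjI allI impI ballI)
    show "length (push sol) = length (reqs J)" by (simp add: push_def ind_simps)
    fix i assume "i < length (push sol)"
    then have i: "i < r" by (simp add: push_def)
    show "fst (push sol ! i) \<subseteq> edges (verts J)"
      unfolding pi[OF i] fst_conv ind_simps
    proof (rule pe_edges)
      fix x assume "x \<in> fst (sol ! i)"
      then have "x \<subseteq> V" using FI[OF i] by (auto simp: edges_iff)
      then show "F ` x \<subseteq> tgt e" unfolding F_def using FT[OF r1] by blast
    qed
    show "set (snd (push sol ! i)) \<subseteq> edges (cum (reqs J) i)"
    proof
      fix q assume "q \<in> set (snd (push sol ! i))"
      then obtain p where p: "p \<in> set (snd (sol ! i))" "q = F ` p" unfolding pi[OF i] by auto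
      then have "p \<in> edges (cum Z i)" using FI[OF i] by blast
      then obtain u v where uv: "p = {u, v}" "u \<noteq> v" by (auto simp: edges_iff)
      note P = pimg[OF i p(1) uv]
      have "f i u \<noteq> f i v"
      proof
        assume "f i u = f i v"
        then have "g i (f i u) = g i (f i v)" by simp
        then show False using P gf[OF i] by simp
      qed
      then show "q \<in> edges (cum (reqs J) i)" unfolding cumJ[OF i] edges_iff using P p(2) by blast
    qed
    have "map (map (\<lambda>p. g i ` p)) (map snd (take (Suc i) (push sol))) = map snd (take (Suc i) sol)"
    proof -
      have t1: "take (Suc i) (push sol) = map (\<lambda>j. push sol ! j) [0..<Suc i]"
        using i by (simp add: push_def take_map)
      have t2: "take (Suc i) sol = map (\<lambda>j. sol ! j) [0..<Suc i]"
        by (rule nth_equalityI) (use i lsol in \<open>simp_all del: upt_Suc\<close>)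
      have "map (\<lambda>p. g i ` p) (snd (push sol ! j)) = snd (sol ! j)" if j: "j < Suc i" for j
      proof -
        have ji: "j \<le> i" "j < r" using j i by auto
        have "g i ` F ` p = p" if p: "p \<in> set (snd (sol ! j))" for p
        proof -
          have "p \<in> edges (cum Z j)" using FI[OF ji(2)] p by blast
          then have "p \<subseteq> cum Z i" using cum_mono[OF ji(1), of Z] by (auto simp: edges_iff)
          then have "\<And>z. z \<in> p \<Longrightarrow> g i (F z) = z" using Fcum[OF i] gf[OF i] unfolding F_def by auto
          then show ?thesis by (simp add: image_image)
        qed
        then show ?thesis unfolding pi[OF ji(2)] snd_conv map_map o_def by (rule map_idI)
      qed
      then show ?thesis unfolding t1 t2 by simp
    qed
    moreover have "feas I i (map snd (take (Suc i) sol))" using FI[OF i] by blast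
    ultimately show "feas J i (map snd (take (Suc i) (push sol)))" unfolding ind_simps by simp
  next
    fix i q assume "i < length (push sol)" and q: "q \<in> set (snd (push sol ! i))"
    then have i: "i < r" by (simp add: push_def)
    obtain p where p: "p \<in> set (snd (sol ! i))" "q = F ` p" using q unfolding pi[OF i] by auto
    have "connected_in (fst (sol ! i)) p" using FI[OF i] p by blast
    then obtain u v where uv: "p = {u, v}" "(u, v) \<in> (edge_rel (fst (sol ! i)))\<^sup>*"
      unfolding connected_in_def by blast
    have "(F u, F v) \<in> (edge_rel (pe F (fst (sol ! i))))\<^sup>*" by (rule pe_path[OF uv(2)])
    moreover have "q = {F u, F v}" using p(2) uv(1) by simp
    ultimately show "connected_in (fst (push sol ! i)) q"
      unfolding pi[OF i] fst_conv connected_in_def by blast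
  qed
qed

lemma push_cost:
  assumes fe: "feasible I sol" and r0: "0 < r"
  shows "cost J (push sol) \<le> (\<Sum>x\<in>(\<Union>i<r. fst (sol ! i)). wt x * rho I {i. i < r \<and> x \<in> fst (sol ! i)})"
proof -
  define F where "F = eF e (r - 1)"
  define R where "R i = fst (sol ! i)" for i
  have r1: "r - 1 < r" using r0 by simp
  have lsol: "length sol = r" using fe unfolding feasible_def by simp
  have RE: "R i \<subseteq> edges V" if "i < r" for i
    using fe that lsol unfolding feasible_def R_def by auto
  have fstP: "fst (push sol ! i) = pe F (R i)" if "i < r" for i
    using that unfolding push_def F_def R_def by simp
  have lenP: "length (push sol) = r" by (simp add: push_def)
  have c1: "cost J (push sol) = (\<Sum>x\<in>(\<Union>i<r. pe F (R i)). edge_len (tdist e) x * rho I {i. i < r \<and> x \<in> pe F (R i)})"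
  proof -
    have U: "(\<Union>i<length (push sol). fst (push sol ! i)) = (\<Union>i<r. pe F (R i))"
      unfolding lenP using fstP by simp
    have S: "\<And>x. {i. i < length (push sol) \<and> x \<in> fst (push sol ! i)} = {i. i < r \<and> x \<in> pe F (R i)}"
      unfolding lenP using fstP by auto
    show ?thesis unfolding cost_def U S rho_ind by (simp add: ind_simps)
  qed
  have fin: "finite (\<Union>i<r. R i)"
  proof (rule finite_subset)
    show "(\<Union>i<r. R i) \<subseteq> edges V" using RE by blast
    show "finite (edges V)" using metV unfolding fin_metric_def by (simp add: finite_edges)
  qed
  have Fx: "F ` x \<in> edges (tgt e)" if x: "x \<in> (\<Union>i<r. R i)" and c: "card (F ` x) = 2" for x
  proof -
    have "pe F {x} \<subseteq> edges (tgt e)"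
    proof (rule pe_edges)
      fix y assume "y \<in> {x}"
      obtain k where k: "k < r" "x \<in> R k" using x by blast
      then have "x \<in> edges V" using RE by blast
      then have "y \<subseteq> V" using \<open>y \<in> {x}\<close> by (auto simp: edges_iff)
      then show "F ` y \<subseteq> tgt e" unfolding F_def using FT[OF r1] by blast
    qed
    moreover have "F ` x \<in> pe F {x}" using c unfolding pe_def by blast
    ultimately show ?thesis by blast
  qed
  show ?thesis unfolding c1 R_def[symmetric]
  proof (rule cost_map[OF rsI fin])
    fix x assume "x \<in> (\<Union>i<r. R i)" "card (F ` x) = 2"
    then show "edge_len (tdist e) (F ` x) \<le> wt x" unfolding wt_def F_def by simp
  next
    fix x assume x: "x \<in> (\<Union>i<r. R i)"
    show "0 \<le> wt x"
    proof (cases "card (F ` x) = 2")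
      case True
      then show ?thesis using Fx[OF x True] edge_len_nonneg[OF fm] unfolding wt_def F_def by simp
    next
      case False then show ?thesis unfolding wt_def F_def by simp
    qed
  next
    fix x assume "x \<in> (\<Union>i<r. pe F (R i))"
    then obtain i y where "i < r" "y \<in> R i" "x = F ` y" "card (F ` y) = 2" unfolding pe_def by blast
    then show "0 \<le> edge_len (tdist e) x" using Fx[of y] edge_len_nonneg[OF fm] by blast
  qed
qed

end


lemma cost_nonneg:
  assumes m: "fin_metric (verts K) (dist K)" and rs: "rho_sub (length (reqs K)) (rho K)"
    and fe: "feasible K sol"
  shows "0 \<le> cost K sol"
  unfolding cost_def
proof (rule sum_nonneg)
  fix x assume "x \<in> (\<Union>i<length sol. fst (sol ! i))"
  then obtain i where i: "i < length sol" "x \<in> fst (sol ! i)" by blast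
  have l: "length sol = length (reqs K)" using fe unfolding feasible_def by simp
  have "x \<in> edges (verts K)" using fe i unfolding feasible_def by blast
  then have "0 \<le> edge_len (dist K) x" by (rule edge_len_nonneg[OF m])
  moreover have "0 \<le> rho K {i. i < length sol \<and> x \<in> fst (sol ! i)}"
    by (rule rho_nonneg[OF rs]) (use i l in auto)
  ultimately show "0 \<le> edge_len (dist K) x * rho K {i. i < length sol \<and> x \<in> fst (sol ! i)}" by simp
qed

lemma OPT_le:
  assumes m: "fin_metric (verts K) (dist K)" and rs: "rho_sub (length (reqs K)) (rho K)"
    and fe: "feasible K sol"
  shows "OPT K \<le> cost K sol" "0 \<le> OPT K"
proof -
  have bb: "bdd_below (cost K ` {sol. feasible K sol})"
    by (rule bdd_belowI[of _ 0]) (use cost_nonneg[OF m rs] in auto)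
  show "OPT K \<le> cost K sol" unfolding OPT_def by (rule cInf_lower) (use fe bb in auto)
  show "0 \<le> OPT K" unfolding OPT_def by (rule cInf_greatest) (use fe cost_nonneg[OF m rs] in auto)
qed

lemma finite_edges': "finite S \<Longrightarrow> finite (edges S)"
  by (rule finite_subset[of _ "Pow S"]) (auto simp: edges_iff)

lemma cost_strip: "cost K (map (\<lambda>x. (fst x, [])) sol) = cost K sol"
proof -
  have eq: "\<And>e. {i. i < length sol \<and> e \<in> fst (map (\<lambda>x. (fst x, [])) sol ! i)} = {i. i < length sol \<and> e \<in> fst (sol ! i)}"
    by auto
  have U: "(\<Union>i<length sol. fst (map (\<lambda>x. (fst x, [])) sol ! i)) = (\<Union>i<length sol. fst (sol ! i))"
    by simp
  show ?thesis unfolding cost_def length_map U eq ..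
qed

lemma OPT_attained:
  fixes K :: "'a nd_inst"
  assumes wf: "wf_inst K" and ex: "feasible K sol0"
  shows "\<exists>sol. feasible K sol \<and> cost K sol = OPT K"
proof -
  define C where "C = cost K ` {sol. feasible K sol}"
  define L where "L = {xs. set xs \<subseteq> Pow (edges (verts K)) \<times> {[] :: 'a set list} \<and> length xs = length (reqs K)}"
  have finL: "finite L" unfolding L_def
  proof (rule finite_lists_length_eq)
    have "finite (verts K)" using wf unfolding wf_inst_def fin_metric_def by blast
    then show "finite (Pow (edges (verts K)) \<times> {[]})" by (simp add: finite_edges')
  qed
  have "C \<subseteq> cost K ` L"
  proof
    fix c assume "c \<in> C"
    then obtain sol where s: "feasible K sol" "c = cost K sol" unfolding C_def by blast
    have "set (map (\<lambda>x. (fst x, [])) sol) \<subseteq> Pow (edges (verts K)) \<times> {[]}"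
    proof
      fix y assume "y \<in> set (map (\<lambda>x. (fst x, [])) sol)"
      then obtain i where i: "i < length sol" "y = (fst (sol ! i), [])" by (auto simp: in_set_conv_nth)
      then have "fst (sol ! i) \<subseteq> edges (verts K)" using s(1) unfolding feasible_def by blast
      then show "y \<in> Pow (edges (verts K)) \<times> {[]}" using i by simp
    qed
    then have "map (\<lambda>x. (fst x, [])) sol \<in> L" using s(1) unfolding L_def feasible_def by simp
    then show "c \<in> cost K ` L" using s(2) cost_strip by (metis image_eqI)
  qed
  then have finC: "finite C" using finL finite_subset by blast
  have neC: "C \<noteq> {}" using ex unfolding C_def by blast
  have "OPT K = Min C" unfolding OPT_def C_def[symmetric] by (rule cInf_eq_Min[OF finC neC])
  then have "OPT K \<in> C" using Min_in[OF finC neC] by simp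
  then show ?thesis unfolding C_def by auto
qed


theorem theorem3p5:
  fixes P :: "'a nd_inst set"
    and MM :: "('a set \<times> ('a \<Rightarrow> 'a \<Rightarrow> real)) set"
    and Alg :: "'a nd_alg pmf"
    and Emb :: "'a emb_alg pmf"
    and \<alpha> \<beta> :: real
  assumes "nd_problem P"
    and "\<forall>(M, dM)\<in>MM. fin_metric M dM"
    and "competitive (over_metrics P MM) Alg \<beta>"
    and "embeds_fully_ext P MM \<alpha> Emb"
    and "compatible P Emb Alg"
  shows "\<exists>Alg'. competitive P Alg' (\<alpha> * \<beta>) \<and>
           ((\<exists>E. Emb = return_pmf E) \<and> (\<exists>A. Alg = return_pmf A) \<longrightarrow> (\<exists>A'. Alg' = return_pmf A'))"
proof -
  have nd1: "\<And>I. I \<in> P \<Longrightarrow> wf_inst I" using assms(1) unfolding nd_problem_def by blast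
  have nd2: "\<And>I M dM f. I \<in> P \<Longrightarrow> fin_metric M dM \<Longrightarrow> is_online_emb (verts I) (dist I) (reqs I) M dM f
        \<Longrightarrow> induced I M dM f \<in> P" using assms(1) unfolding nd_problem_def by blast
  define Alg' where "Alg' = map_pmf (\<lambda>(E, A). pull E A) (pair_pmf Emb Alg)"
  have embE: "\<And>E. E \<in> set_pmf Emb \<Longrightarrow> online_emb_alg E" using assms(4) unfolding embeds_fully_ext_def by blast
  have algA: "\<And>A. A \<in> set_pmf Alg \<Longrightarrow> online_alg A" using assms(3) unfolding competitive_def by blast
  have det: "(\<exists>E. Emb = return_pmf E) \<and> (\<exists>A. Alg = return_pmf A) \<longrightarrow> (\<exists>A'. Alg' = return_pmf A')"
  proof
    assume "(\<exists>E. Emb = return_pmf E) \<and> (\<exists>A. Alg = return_pmf A)"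
    then obtain E A where "Emb = return_pmf E" "Alg = return_pmf A" by blast
    then have "Alg' = return_pmf (pull E A)" unfolding Alg'_def by simp
    then show "\<exists>A'. Alg' = return_pmf A'" by blast
  qed
  have comp: "competitive P Alg' (\<alpha> * \<beta>)"
    unfolding competitive_def
  proof (intro conjI)
    show "\<forall>X\<in>set_pmf Alg'. online_alg X"
    proof
      fix X assume "X \<in> set_pmf Alg'"
      then obtain E A where "E \<in> set_pmf Emb" "A \<in> set_pmf Alg" "X = pull E A" unfolding Alg'_def by auto
      then show "online_alg X" using online_pull embE algA by blast
    qed
  next
    show "\<forall>I\<in>P. (\<exists>sol. feasible I sol) \<longrightarrow> (\<forall>A\<in>set_pmf Alg'. feasible I (run A I)) \<and>
          (\<integral>\<^sup>+ A. ennreal (cost I (run A I)) \<partial>measure_pmf Alg') \<le> ennreal (\<alpha> * \<beta> * OPT I)"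
    proof (intro ballI impI)
    fix I assume I: "I \<in> P" and ex: "\<exists>sol. feasible I sol"
    define r where "r = length (reqs I)"
    have wfI: "wf_inst I" using nd1 I by blast
    have EI: "(tgt (emb_of E I), tdist (emb_of E I)) \<in> MM \<and>
           is_online_emb (verts I) (dist I) (reqs I) (tgt (emb_of E I)) (tdist (emb_of E I)) (emap (emb_of E I)) \<and>
           fully_ext (verts I) (dist I) (reqs I) (emb_of E I)" if E: "E \<in> set_pmf Emb" for E
      using assms(4) I E unfolding embeds_fully_ext_def emb_of_def by blast
    have fmE: "fin_metric (tgt (emb_of E I)) (tdist (emb_of E I))" if E: "E \<in> set_pmf Emb" for E
      using assms(2) EI[OF E] by blast
    have ctxE: "ctx I E" if E: "E \<in> set_pmf Emb" for E
      unfolding ctx_def using wfI EI[OF E] fmE[OF E] by blast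
    have JE: "ind E I \<in> over_metrics P MM" if E: "E \<in> set_pmf Emb" for E
    proof -
      have "ind E I \<in> P" unfolding ind_def by (rule nd2[OF I fmE[OF E]]) (use EI[OF E] in blast)
      moreover have "(verts (ind E I), dist (ind E I)) \<in> MM" using EI[OF E] by (simp add: ind_simps)
      ultimately show ?thesis unfolding over_metrics_def by blast
    qed
    obtain sol0 where sol0: "feasible I sol0" "cost I sol0 = OPT I" using OPT_attained[OF wfI] ex by blast
    have lsol0: "length sol0 = r" using sol0 unfolding feasible_def r_def by simp
    have Jfeas: "\<exists>sol. feasible (ind E I) sol" if E: "E \<in> set_pmf Emb" for E
    proof (cases "r = 0")
      case True
      then have "feasible (ind E I) []" unfolding feasible_def by (simp add: ind_simps r_def)
      then show ?thesis by blast
    next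
      case False
      then show ?thesis using ctx.push_feasible[OF ctxE[OF E] sol0(1)] r_def by blast
    qed
    have competJ: "(\<forall>A\<in>set_pmf Alg. feasible (ind E I) (run A (ind E I))) \<and>
        (\<integral>\<^sup>+ A. ennreal (cost (ind E I) (run A (ind E I))) \<partial>measure_pmf Alg) \<le> ennreal (\<beta> * OPT (ind E I))"
      if E: "E \<in> set_pmf Emb" for E
      using assms(3) JE[OF E] Jfeas[OF E] unfolding competitive_def by blast
    have compat: "\<Union> (fst (A (ind E I) i)) \<subseteq> esub (emb_of E I) i"
      if "E \<in> set_pmf Emb" "A \<in> set_pmf Alg" "i < r" for E A i
      using assms(5) I that unfolding compatible_def Let_def ind_def emb_of_def r_def by blast
    have pfeas: "feasible I (run (pull E A) I)" if E: "E \<in> set_pmf Emb" and A: "A \<in> set_pmf Alg" for E A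
      by (rule ctx.pull_feasible[OF ctxE[OF E]]) (use competJ[OF E] A compat[OF E A] r_def in auto)
    have pcost: "cost I (run (pull E A) I) \<le> cost (ind E I) (run A (ind E I))"
      if E: "E \<in> set_pmf Emb" and A: "A \<in> set_pmf Alg" for E A
      by (rule ctx.pull_cost[OF ctxE[OF E]]) (use competJ[OF E] A compat[OF E A] r_def in auto)
    have F1: "\<forall>X\<in>set_pmf Alg'. feasible I (run X I)"
      unfolding Alg'_def using pfeas by auto
    have F2: "(\<integral>\<^sup>+ X. ennreal (cost I (run X I)) \<partial>measure_pmf Alg') \<le> ennreal (\<alpha> * \<beta> * OPT I)"
    proof (cases "r = 0")
      case True
      then have "\<And>X. cost I (run X I) = 0" unfolding cost_def run_def r_def by simp
      then show ?thesis by simp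
    next
      case False
      then have r0: "0 < r" by simp
      have r1: "r - 1 < length (reqs I)" using r0 r_def by simp
      define U where "U = (\<Union>i<r. fst (sol0 ! i))"
      define S where "S x = rho I {i. i < r \<and> x \<in> fst (sol0 ! i)}" for x
      define bp where "bp = max \<beta> 0"
      define ap where "ap = max \<alpha> 0"
      have mI: "fin_metric (verts I) (dist I)" using wfI unfolding wf_inst_def by blast
      have rs: "rho_sub r (rho I)" using load_rho_sub wfI unfolding wf_inst_def r_def by blast
      have costI: "cost I sol0 = (\<Sum>x\<in>U. edge_len (dist I) x * S x)"
        unfolding cost_def U_def S_def lsol0 ..
      have UE: "U \<subseteq> edges (verts I)"
      proof
        fix x assume "x \<in> U"
        then obtain i where i: "i < r" "x \<in> fst (sol0 ! i)" unfolding U_def by blast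
        have "i < length sol0" using i lsol0 by simp
        then show "x \<in> edges (verts I)" using sol0(1) i(2) unfolding feasible_def by blast
      qed
      have finU: "finite U"
        by (rule finite_subset[OF UE]) (use mI in \<open>simp add: fin_metric_def finite_edges'\<close>)
      have Snn: "0 \<le> S x" if "x \<in> U" for x
        unfolding S_def by (rule rho_nonneg[OF rs]) (use that in \<open>auto simp: U_def\<close>)
      have Lnn: "0 \<le> edge_len (dist I) x" if "x \<in> U" for x
        using edge_len_nonneg[OF mI] UE that by blast
      have uvx: "\<exists>u v. x = {u, v} \<and> u \<in> verts I \<and> v \<in> verts I \<and> u \<noteq> v" if "x \<in> U" for x
        using UE that by (auto simp: edges_iff)
      have wtE: "ctx.wt I E {u, v} = tdist (emb_of E I) (eF (emb_of E I) (r - 1) u) (eF (emb_of E I) (r - 1) v)"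
        if E: "E \<in> set_pmf Emb" and uv: "u \<in> verts I" "v \<in> verts I" "u \<noteq> v" for E u v
        using ctx.wt_eq[OF ctxE[OF E] r1 uv] r_def by simp
      have wnn: "0 \<le> ctx.wt I E x" if E: "E \<in> set_pmf Emb" and x: "x \<in> U" for E x
      proof -
        obtain u v where uv: "x = {u, v}" "u \<in> verts I" "v \<in> verts I" "u \<noteq> v" using uvx[OF x] by blast
        have "eF (emb_of E I) (r - 1) u \<in> tgt (emb_of E I)" "eF (emb_of E I) (r - 1) v \<in> tgt (emb_of E I)"
          using ctx.FT[OF ctxE[OF E] r1] uv r_def by auto
        then show ?thesis using wtE[OF E uv(2,3,4)] fmE[OF E] uv(1) unfolding fin_metric_def by simp
      qed
      have s1: "(\<integral>\<^sup>+ X. ennreal (cost I (run X I)) \<partial>measure_pmf Alg')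
          = (\<integral>\<^sup>+ E. \<integral>\<^sup>+ A. ennreal (cost I (run (pull E A) I)) \<partial>measure_pmf Alg \<partial>measure_pmf Emb)"
        unfolding Alg'_def by (simp add: nn_integral_pair_pmf')
      also have "\<dots> \<le> (\<integral>\<^sup>+ E. \<integral>\<^sup>+ A. ennreal (cost (ind E I) (run A (ind E I))) \<partial>measure_pmf Alg \<partial>measure_pmf Emb)"
      proof (rule nn_integral_mono_AE)
        show "AE E in measure_pmf Emb. (\<integral>\<^sup>+ A. ennreal (cost I (run (pull E A) I)) \<partial>measure_pmf Alg)
             \<le> (\<integral>\<^sup>+ A. ennreal (cost (ind E I) (run A (ind E I))) \<partial>measure_pmf Alg)"
          unfolding AE_measure_pmf_iff
        proof
          fix E assume E: "E \<in> set_pmf Emb"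
          show "(\<integral>\<^sup>+ A. ennreal (cost I (run (pull E A) I)) \<partial>measure_pmf Alg)
             \<le> (\<integral>\<^sup>+ A. ennreal (cost (ind E I) (run A (ind E I))) \<partial>measure_pmf Alg)"
            by (rule nn_integral_mono_AE) (use pcost[OF E] in \<open>auto simp: AE_measure_pmf_iff intro: ennreal_leI\<close>)
        qed
      qed
      also have "\<dots> \<le> (\<integral>\<^sup>+ E. ennreal (\<beta> * OPT (ind E I)) \<partial>measure_pmf Emb)"
        by (rule nn_integral_mono_AE) (use competJ in \<open>auto simp: AE_measure_pmf_iff\<close>)
      also have "\<dots> \<le> (\<integral>\<^sup>+ E. (\<Sum>x\<in>U. ennreal (bp * S x) * ennreal (ctx.wt I E x)) \<partial>measure_pmf Emb)"
      proof (rule nn_integral_mono_AE)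
        show "AE E in measure_pmf Emb. ennreal (\<beta> * OPT (ind E I)) \<le> (\<Sum>x\<in>U. ennreal (bp * S x) * ennreal (ctx.wt I E x))"
          unfolding AE_measure_pmf_iff
        proof
          fix E assume E: "E \<in> set_pmf Emb"
          define W where "W = (\<Sum>x\<in>U. ctx.wt I E x * S x)"
          have mJ: "fin_metric (verts (ind E I)) (dist (ind E I))" using fmE[OF E] by (simp add: ind_simps)
          have rsJ: "rho_sub (length (reqs (ind E I))) (rho (ind E I))" using rs by (simp add: ind_simps rho_ind r_def)
          have pf: "feasible (ind E I) (ctx.push I E sol0)" by (rule ctx.push_feasible[OF ctxE[OF E] sol0(1)]) (use r0 r_def in simp)
          have "OPT (ind E I) \<le> cost (ind E I) (ctx.push I E sol0)" by (rule OPT_le(1)[OF mJ rsJ pf])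
          also have "\<dots> \<le> W" unfolding W_def U_def S_def
            using ctx.push_cost[OF ctxE[OF E] sol0(1)] r0 r_def by simp
          finally have ow: "OPT (ind E I) \<le> W" .
          have o0: "0 \<le> OPT (ind E I)" by (rule OPT_le(2)[OF mJ rsJ pf])
          have "\<beta> * OPT (ind E I) \<le> bp * W"
          proof (cases "\<beta> \<ge> 0")
            case True then show ?thesis using ow unfolding bp_def by (simp add: mult_left_mono)
          next
            case False then show ?thesis using o0 unfolding bp_def by (simp add: mult_nonpos_nonneg)
          qed
          then have "ennreal (\<beta> * OPT (ind E I)) \<le> ennreal (bp * W)" by (rule ennreal_leI)
          also have "bp * W = (\<Sum>x\<in>U. (bp * S x) * ctx.wt I E x)" unfolding W_def
            by (simp add: sum_distrib_left mult_ac)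
          also have "ennreal \<dots> = (\<Sum>x\<in>U. ennreal ((bp * S x) * ctx.wt I E x))"
            by (rule sum_ennreal[symmetric]) (use Snn wnn[OF E] in \<open>simp add: bp_def\<close>)
          also have "\<dots> = (\<Sum>x\<in>U. ennreal (bp * S x) * ennreal (ctx.wt I E x))"
            by (rule sum.cong[OF refl], rule ennreal_mult) (use Snn wnn[OF E] in \<open>simp_all add: bp_def\<close>)
          finally show "ennreal (\<beta> * OPT (ind E I)) \<le> (\<Sum>x\<in>U. ennreal (bp * S x) * ennreal (ctx.wt I E x))" .
        qed
      qed
      also have "\<dots> = (\<Sum>x\<in>U. ennreal (bp * S x) * (\<integral>\<^sup>+ E. ennreal (ctx.wt I E x) \<partial>measure_pmf Emb))"
        by (simp add: nn_integral_sum nn_integral_cmult)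
      also have "\<dots> \<le> (\<Sum>x\<in>U. ennreal (bp * S x) * ennreal (ap * edge_len (dist I) x))"
      proof (rule sum_mono, rule mult_left_mono)
        fix x assume x: "x \<in> U"
        obtain u v where uv: "x = {u, v}" "u \<in> verts I" "v \<in> verts I" "u \<noteq> v" using uvx[OF x] by blast
        have "(\<integral>\<^sup>+ E. ennreal (ctx.wt I E x) \<partial>measure_pmf Emb)
            = (\<integral>\<^sup>+ E. ennreal (tdist (E (verts I, dist I, reqs I))
                      (eF (E (verts I, dist I, reqs I)) (r - 1) u) (eF (E (verts I, dist I, reqs I)) (r - 1) v)) \<partial>measure_pmf Emb)"
          by (rule nn_integral_cong_AE) (use wtE uv in \<open>auto simp: AE_measure_pmf_iff emb_of_def\<close>)
        also have "\<dots> \<le> ennreal (\<alpha> * dist I u v)"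
          using assms(4) I r1 uv unfolding embeds_fully_ext_def r_def by blast
        also have "\<dots> \<le> ennreal (ap * edge_len (dist I) x)"
        proof (rule ennreal_leI)
          have "edge_len (dist I) x = dist I u v" unfolding uv(1) by (rule edge_len_metric[OF mI uv(2,3,4)])
          moreover have "0 \<le> dist I u v" using mI uv unfolding fin_metric_def by blast
          ultimately show "\<alpha> * dist I u v \<le> ap * edge_len (dist I) x" unfolding ap_def by (simp add: mult_right_mono)
        qed
        finally show "(\<integral>\<^sup>+ E. ennreal (ctx.wt I E x) \<partial>measure_pmf Emb) \<le> ennreal (ap * edge_len (dist I) x)" .
      qed simp
      also have "\<dots> = ennreal (bp * ap * cost I sol0)"
      proof -
        have "(\<Sum>x\<in>U. ennreal (bp * S x) * ennreal (ap * edge_len (dist I) x))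
            = (\<Sum>x\<in>U. ennreal (bp * ap * (edge_len (dist I) x * S x)))"
        proof (rule sum.cong[OF refl])
          fix x assume x: "x \<in> U"
          have "ennreal (bp * S x) * ennreal (ap * edge_len (dist I) x) = ennreal (bp * S x * (ap * edge_len (dist I) x))"
            by (rule ennreal_mult[symmetric]) (use Snn[OF x] Lnn[OF x] in \<open>simp_all add: bp_def ap_def\<close>)
          then show "ennreal (bp * S x) * ennreal (ap * edge_len (dist I) x) = ennreal (bp * ap * (edge_len (dist I) x * S x))"
            by (simp add: mult_ac)
        qed
        also have "\<dots> = ennreal (\<Sum>x\<in>U. bp * ap * (edge_len (dist I) x * S x))"
          by (rule sum_ennreal) (use Snn Lnn in \<open>simp add: bp_def ap_def\<close>)
        also have "\<dots> = ennreal (bp * ap * cost I sol0)" unfolding costI by (simp add: sum_distrib_left)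
        finally show ?thesis .
      qed
      also have "\<dots> \<le> ennreal (\<alpha> * \<beta> * OPT I)"
      proof -
        have c0: "0 \<le> cost I sol0" unfolding costI using Snn Lnn by (simp add: sum_nonneg)
        show ?thesis
        proof (cases "\<alpha> \<ge> 0 \<and> \<beta> \<ge> 0")
          case True then show ?thesis unfolding bp_def ap_def sol0(2) by (simp add: mult_ac)
        next
          case False
          then have "bp * ap = 0" unfolding bp_def ap_def by auto
          then have "bp * ap * cost I sol0 = 0" by simp
          then show ?thesis by (simp only: ennreal_0 zero_le)
        qed
      qed
      finally show ?thesis .
    qed
    show "(\<forall>A\<in>set_pmf Alg'. feasible I (run A I)) \<and>
          (\<integral>\<^sup>+ A. ennreal (cost I (run A I)) \<partial>measure_pmf Alg') \<le> ennreal (\<alpha> * \<beta> * OPT I)"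
      using F1 F2 by blast
    qed
  qed
  show ?thesis using comp det by blast
qed

end
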